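(* Let $A\in\mathbb{C}^{m\times n}_r$ satisfy ${\rm rank}(AA^{\sim})={\rm rank}(A^{\sim}A)={\rm rank}(A)$ and be partitioned as $A=\left(\begin{array}{cc}A_1 & A_2\\ A_3 & A_4\end{array}\right)$, where $A_1\in\mathbb{C}^{r\times r}$ is nonsingular, $A_2\in\mathbb{C}^{r\times(n-r)}$, $A_3\in\mathbb{C}^{(m-r)\times r}$, $A_4\in\mathbb{C}^{(m-r)\times(n-r)}$. Then \[ A^{\mathfrak{m}}=\left(\begin{array}{cc}A_1 & A_2\end{array}\right)^{\sim}\left[\left(\begin{array}{c}A_1\\ A_3\end{array}\right)^{\sim}A\left(\begin{array}{cc}A_1 & A_2\end{array}\right)^{\sim}\right]^{-1}\left(\begin{array}{c}A_1\\ A_3\end{array}\right)^{\sim}. \]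
   Context: The Minkowski metric matrix of order $k$ is $\left(\begin{array}{cc}1&0\\0&-I_{k-1}\end{array}\right)$; the Minkowski adjoint of $M\in\mathbb{C}^{p\times q}$ is $M^{\sim}=G_qM^*G_p$ with $G_q,G_p$ the Minkowski metric matrices of orders $q$ and $p$. The Minkowski inverse $A^{\mathfrak{m}}$ is the unique $X$ with $AXA=A$, $XAX=X$, $(AX)^{\sim}=AX$, $(XA)^{\sim}=XA$. *)

theory Defs
  imports "Jordan_Normal_Form.Schur_Decomposition" "Jordan_Normal_Form.DL_Rank"
begin

definition minkowski_metric :: "nat \<Rightarrow> complex mat" where
  "minkowski_metric k = mat k k (\<lambda>(i, j). if i = j then (if i = 0 then 1 else -1) else 0)"

definition mink_adj :: "complex mat \<Rightarrow> complex mat" where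
  "mink_adj M = minkowski_metric (dim_col M) * mat_adjoint M * minkowski_metric (dim_row M)"

definition mrank :: "complex mat \<Rightarrow> nat" where
  "mrank A = vec_space.rank (dim_row A) A"

definition is_minkowski_inverse :: "complex mat \<Rightarrow> complex mat \<Rightarrow> bool" where
  "is_minkowski_inverse A X \<longleftrightarrow>
     X \<in> carrier_mat (dim_col A) (dim_row A) \<and>
     A * X * A = A \<and> X * A * X = X \<and>
     mink_adj (A * X) = A * X \<and> mink_adj (X * A) = X * A"

definition minkowski_inverse :: "complex mat \<Rightarrow> complex mat" where
  "minkowski_inverse A = (THE X. is_minkowski_inverse A X)"

definition mat_inv :: "complex mat \<Rightarrow> complex mat" where
  "mat_inv C = (THE B. B \<in> carrier_mat (dim_row C) (dim_row C) \<and> inverts_mat C B \<and> inverts_mat B C)"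

definition row_block :: "complex mat \<Rightarrow> complex mat \<Rightarrow> complex mat" where
  "row_block B1 B2 = four_block_mat B1 B2 (0\<^sub>m 0 (dim_col B1)) (0\<^sub>m 0 (dim_col B2))"

end

theory Submission
  imports Defs
begin


definition sg :: "nat \<Rightarrow> complex" where "sg i = (if i = 0 then 1 else -1)"

lemma sg_sq[simp]: "sg i * sg i = 1" by (simp add: sg_def)
lemma cnj_sg[simp]: "cnj (sg i) = sg i" by (simp add: sg_def)

lemma G_carrier[simp]: "minkowski_metric k \<in> carrier_mat k k"
  by (simp add: minkowski_metric_def)
lemma G_dims[simp]: "dim_row (minkowski_metric k) = k" "dim_col (minkowski_metric k) = k"
  by (simp_all add: minkowski_metric_def)
lemma G_index: "i < k \<Longrightarrow> l < k \<Longrightarrow> minkowski_metric k $$ (i,l) = (if i = l then sg i else 0)"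
  by (simp add: minkowski_metric_def sg_def)

lemma G_left: assumes "M \<in> carrier_mat k c"
  shows "minkowski_metric k * M = mat k c (\<lambda>(i,j). sg i * M $$ (i,j))"
proof (rule eq_matI)
  fix i j assume i: "i < dim_row (mat k c (\<lambda>(i,j). sg i * M $$ (i,j)))" and j: "j < dim_col (mat k c (\<lambda>(i,j). sg i * M $$ (i,j)))"
  then have i: "i < k" and j: "j < c" by auto
  have "(minkowski_metric k * M) $$ (i,j) = (\<Sum>l\<in>{0..<k}. minkowski_metric k $$ (i,l) * M $$ (l,j))"
    using i j assms by (simp add: scalar_prod_def)
  also have "\<dots> = (\<Sum>l\<in>{0..<k}. if l = i then sg i * M $$ (i,j) else 0)"
    by (rule sum.cong) (use i in \<open>auto simp: G_index\<close>)
  also have "\<dots> = sg i * M $$ (i,j)"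
    using i by simp
  finally show "(minkowski_metric k * M) $$ (i,j) = mat k c (\<lambda>(i,j). sg i * M $$ (i,j)) $$ (i,j)"
    using i j by simp
qed (use assms in \<open>auto simp: minkowski_metric_def\<close>)

lemma G_right: assumes "M \<in> carrier_mat k c"
  shows "M * minkowski_metric c = mat k c (\<lambda>(i,j). M $$ (i,j) * sg j)"
proof (rule eq_matI)
  fix i j assume i: "i < dim_row (mat k c (\<lambda>(i,j). M $$ (i,j) * sg j))" and j: "j < dim_col (mat k c (\<lambda>(i,j). M $$ (i,j) * sg j))"
  then have i: "i < k" and j: "j < c" by auto
  have "(M * minkowski_metric c) $$ (i,j) = (\<Sum>l\<in>{0..<c}. M $$ (i,l) * minkowski_metric c $$ (l,j))"
    using i j assms by (simp add: scalar_prod_def)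
  also have "\<dots> = (\<Sum>l\<in>{0..<c}. if l = j then M $$ (i,j) * sg j else 0)"
    by (rule sum.cong) (use j in \<open>auto simp: G_index\<close>)
  also have "\<dots> = M $$ (i,j) * sg j"
    using j by simp
  finally show "(M * minkowski_metric c) $$ (i,j) = mat k c (\<lambda>(i,j). M $$ (i,j) * sg j) $$ (i,j)"
    using i j by simp
qed (use assms in \<open>auto simp: minkowski_metric_def\<close>)

lemma adj_index: "mat_adjoint M = mat (dim_col M) (dim_row M) (\<lambda>(i,j). cnj (M $$ (j,i)))"
  by (rule eq_matI) (auto simp: mat_adjoint_def mat_of_rows_def)

lemma mink_adj_alt: "mink_adj M = mat (dim_col M) (dim_row M) (\<lambda>(i,j). sg i * sg j * cnj (M $$ (j,i)))"
  unfolding mink_adj_def adj_index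
  by (subst G_left[of _ "dim_col M" "dim_row M"], force, subst G_right[of _ "dim_col M" "dim_row M"], force,
      rule eq_matI, auto)

lemma mink_adj_dims[simp]: "dim_row (mink_adj M) = dim_col M" "dim_col (mink_adj M) = dim_row M"
  by (simp_all add: mink_adj_alt)

lemma mink_adj_carrier[simp,intro]: "M \<in> carrier_mat a b \<Longrightarrow> mink_adj M \<in> carrier_mat b a"
  by (simp add: mink_adj_alt)

lemma mink_adj_idem[simp]: "mink_adj (mink_adj M) = M"
  by (rule eq_matI) (auto simp: mink_adj_alt sg_def)

lemma mink_adj_one[simp]: "mink_adj (1\<^sub>m k) = 1\<^sub>m k"
  by (rule eq_matI) (auto simp: mink_adj_alt)

lemma mink_adj_mult: assumes A: "A \<in> carrier_mat a b" and B: "B \<in> carrier_mat b c"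
  shows "mink_adj (A * B) = mink_adj B * mink_adj A"
proof (rule eq_matI)
  fix i j assume "i < dim_row (mink_adj B * mink_adj A)" "j < dim_col (mink_adj B * mink_adj A)"
  then have i: "i < c" and j: "j < a" using A B by auto
  have "mink_adj (A * B) $$ (i,j) = sg i * sg j * cnj (\<Sum>l\<in>{0..<b}. A $$ (j,l) * B $$ (l,i))"
    using i j A B by (simp add: mink_adj_alt scalar_prod_def)
  also have "\<dots> = (\<Sum>l\<in>{0..<b}. (sg i * sg l * cnj (B $$ (l,i))) * (sg l * sg j * cnj (A $$ (j,l))))"
    unfolding cnj_sum sum_distrib_left
  proof (rule sum.cong)
    fix l
    have "sg l * sg l = 1" by simp
    then show "sg i * sg j * cnj (A $$ (j, l) * B $$ (l, i)) =
         sg i * sg l * cnj (B $$ (l, i)) * (sg l * sg j * cnj (A $$ (j, l)))"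
      by (simp add: algebra_simps)
  qed simp
  also have "\<dots> = (mink_adj B * mink_adj A) $$ (i,j)"
    using i j A B by (simp add: mink_adj_alt scalar_prod_def)
  finally show "mink_adj (A * B) $$ (i,j) = (mink_adj B * mink_adj A) $$ (i,j)" .
qed (use A B in auto)

lemma mink_inv_unique:
  assumes A: "A \<in> carrier_mat m n" and hX: "is_minkowski_inverse A X" and hY: "is_minkowski_inverse A Y"
  shows "X = Y"
proof -
  have X: "X \<in> carrier_mat n m" and Y: "Y \<in> carrier_mat n m"
    using hX hY A unfolding is_minkowski_inverse_def by auto
  note defs = hX[unfolded is_minkowski_inverse_def] hY[unfolded is_minkowski_inverse_def]
  have AXA: "A * X * A = A" and XAX: "X * A * X = X" and AX: "mink_adj (A * X) = A * X"
    and XA: "mink_adj (X * A) = X * A" using defs by auto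
  have AYA: "A * Y * A = A" and YAY: "Y * A * Y = Y" and AY: "mink_adj (A * Y) = A * Y"
    and YA: "mink_adj (Y * A) = Y * A" using defs by auto
  have XA_c: "X * A \<in> carrier_mat n n" and AX_c: "A * X \<in> carrier_mat m m"
    and YA_c: "Y * A \<in> carrier_mat n n" and AY_c: "A * Y \<in> carrier_mat m m"
    using A X Y by auto
  have Xa: "mink_adj X \<in> carrier_mat m n" and Ya: "mink_adj Y \<in> carrier_mat m n" and Aa: "mink_adj A \<in> carrier_mat n m"
    using A X Y by auto
  have 1: "X * mink_adj X * mink_adj A = X"
  proof -
    have "X * mink_adj X * mink_adj A = X * (mink_adj X * mink_adj A)"
      using assoc_mult_mat[OF X Xa Aa] .
    also have "\<dots> = X * (A * X)" using mink_adj_mult[OF A X] AX by simp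
    also have "\<dots> = X" using XAX assoc_mult_mat[OF X A X] by simp
    finally show ?thesis .
  qed
  have 2: "mink_adj A * (A * Y) = mink_adj A"
  proof -
    have "mink_adj A = mink_adj (A * Y * A)" using AYA by simp
    also have "\<dots> = mink_adj A * mink_adj (A * Y)" using mink_adj_mult[OF AY_c A] by simp
    also have "\<dots> = mink_adj A * (A * Y)" using AY by simp
    finally show ?thesis by simp
  qed
  have 3: "mink_adj A * mink_adj Y * Y = Y"
  proof -
    have "mink_adj A * mink_adj Y * Y = mink_adj (Y * A) * Y" using mink_adj_mult[OF Y A] by simp
    also have "\<dots> = Y" using YA YAY by simp
    finally show ?thesis .
  qed
  have 4: "(X * A) * mink_adj A = mink_adj A"
  proof -
    have "mink_adj A = mink_adj (A * (X * A))" using AXA assoc_mult_mat[OF A X A] by simp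
    also have "\<dots> = mink_adj (X * A) * mink_adj A" using mink_adj_mult[OF A XA_c] by simp
    also have "\<dots> = (X * A) * mink_adj A" using XA by simp
    finally show ?thesis by simp
  qed
  have "X = X * mink_adj X * (mink_adj A * (A * Y))" using 1 2 by simp
  also have "\<dots> = (X * mink_adj X * mink_adj A) * A * Y"
  proof -
    have P: "X * mink_adj X \<in> carrier_mat n n" using X Xa by auto
    have PA: "X * mink_adj X * mink_adj A \<in> carrier_mat n m" using P Aa by auto
    show ?thesis using assoc_mult_mat[OF P Aa AY_c] assoc_mult_mat[OF PA A Y] by simp
  qed
  also have "\<dots> = X * A * Y" using 1 by simp
  finally have L: "X = X * A * Y" .
  have "Y = ((X * A) * mink_adj A) * mink_adj Y * Y" using 3 4 by simp
  also have "\<dots> = X * A * (mink_adj A * mink_adj Y * Y)"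
  proof -
    have QA: "X * A * mink_adj A \<in> carrier_mat n m" using XA_c Aa by auto
    have YY: "mink_adj Y * Y \<in> carrier_mat m m" using Ya Y by auto
    show ?thesis using assoc_mult_mat[OF QA Ya Y] assoc_mult_mat[OF XA_c Aa YY] assoc_mult_mat[OF Aa Ya Y] by simp
  qed
  also have "\<dots> = X * A * Y" using 3 by simp
  finally show ?thesis using L by simp
qed

lemma minkowski_inverse_eq:
  assumes A: "A \<in> carrier_mat m n" and hX: "is_minkowski_inverse A X"
  shows "minkowski_inverse A = X"
  unfolding minkowski_inverse_def using mink_inv_unique[OF A hX] hX by blast



context vec_space
begin

lemma rank_mult_le:
  assumes M: "M \<in> carrier_mat n c" and B: "B \<in> carrier_mat c d"
  shows "rank (M * B) \<le> rank M"
proof -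
  have MB: "M * B \<in> carrier_mat n d" using M B by auto
  have sub: "col_space (M * B) \<subseteq> col_space M"
  proof
    fix y assume "y \<in> col_space (M * B)"
    then obtain x where x: "x \<in> carrier_vec d" "(M * B) *\<^sub>v x = y" and y: "y \<in> carrier_vec n"
      unfolding col_space_eq[OF MB] using MB B M by auto
    have "M *\<^sub>v (B *\<^sub>v x) = y" using x assoc_mult_mat_vec[OF M B x(1)] by simp
    moreover have "B *\<^sub>v x \<in> carrier_vec c" using B by (simp add: carrier_vecI)
    ultimately show "y \<in> col_space M" unfolding col_space_eq[OF M] using M y by auto
  qed
  have subM: "VectorSpace.subspace class_ring (col_space M) V"
    unfolding col_space_def using M by (metis cols_dim carrier_matD(1) span_is_subspace)
  have subMB: "VectorSpace.subspace class_ring (col_space (M * B)) V"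
    unfolding col_space_def using MB by (metis cols_dim carrier_matD(1) span_is_subspace)
  have nest: "VectorSpace.subspace class_ring (col_space (M * B)) (vs (col_space M))"
    using nested_subspaces[OF subM subMB sub] .
  have fM: "vectorspace.fin_dim class_ring (vs (col_space M))"
    unfolding col_space_def using fin_dim_span_cols[OF M] .
  have fMB: "vectorspace.fin_dim class_ring (vs (col_space (M * B)))"
    unfolding col_space_def using fin_dim_span_cols[OF MB] .
  have "vectorspace.dim class_ring (vs (col_space (M * B))) \<le> vectorspace.dim class_ring (vs (col_space M))"
    using vectorspace.subspace_dim[OF subspace_is_vs[OF subM] nest fM] fMB by auto
  then show ?thesis unfolding rank_def col_space_def .
qed

lemma rank_lt_null:
  assumes M: "M \<in> carrier_mat n c" and v: "v \<in> carrier_vec c" "v \<noteq> 0\<^sub>v c" "M *\<^sub>v v = 0\<^sub>v n"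
  shows "rank M < c"
proof (cases "distinct (cols M)")
  case True
  have ld: "lin_dep (set (cols M))" using lin_depI[OF M v True] .
  have le: "rank M \<le> c" using rank_le_nc[OF M] .
  show ?thesis
  proof (rule ccontr)
    assume "\<not> rank M < c"
    then have "rank M = c" using le by simp
    then have "lin_indpt (set (cols M))" using full_rank_lin_indpt[OF M _ True] by simp
    then show False using ld by simp
  qed
next
  case False
  obtain S where S: "maximal S (\<lambda>T. T \<subseteq> set (cols M) \<and> lin_indpt T)"
    using maximal_exists[of "(\<lambda>T. T \<subseteq> set (cols M) \<and> lin_indpt T)" "card (set (cols M))" "{}"]
    by (meson List.finite_set card_mono empty_iff empty_subsetI finite_lin_indpt2 rev_finite_subset)
  then have "card S \<le> card (set (cols M))" by (simp add: card_mono maximal_def)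
  moreover have "card (set (cols M)) < c"
    using False M card_distinct[of "cols M"] card_length[of "cols M"] by fastforce
  ultimately show ?thesis using rank_card_indpt[OF M S] by simp
qed

end

lemma det_nonzero_from_rank:
  fixes P L Rm :: "complex mat"
  assumes P: "P \<in> carrier_mat r r" and L: "L \<in> carrier_mat k r" and Rm: "Rm \<in> carrier_mat r d"
    and rk: "vec_space.rank k (L * P * Rm) = r"
  shows "det P \<noteq> 0"
proof
  assume "det P = 0"
  then obtain v where v: "v \<in> carrier_vec r" "v \<noteq> 0\<^sub>v r" "P *\<^sub>v v = 0\<^sub>v r"
    using det_0_iff_vec_prod_zero_field[OF P] by blast
  have LP: "L * P \<in> carrier_mat k r" using L P by auto
  have "(L * P) *\<^sub>v v = 0\<^sub>v k" using assoc_mult_mat_vec[OF L P v(1)] v L by auto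
  then have "vec_space.rank k (L * P) < r" using vec_space.rank_lt_null[OF LP v(1,2)] by simp
  moreover have "vec_space.rank k (L * P * Rm) \<le> vec_space.rank k (L * P)"
    using vec_space.rank_mult_le[OF LP Rm] .
  ultimately show False using rk by simp
qed



lemma mult_unit_vec_col: fixes C :: "complex mat" assumes C: "C \<in> carrier_mat m r" and i: "i < r"
  shows "C *\<^sub>v unit_vec r i = col C i"
  by (rule eq_vecI) (use C i in auto)

lemma factor_exists:
  fixes A C :: "complex mat"
  assumes A: "A \<in> carrier_mat m n" and C: "C \<in> carrier_mat m r" and rn: "r \<le> n"
    and colC: "\<And>k. k < r \<Longrightarrow> col C k = col A k"
    and inj: "\<And>v. v \<in> carrier_vec r \<Longrightarrow> C *\<^sub>v v = 0\<^sub>v m \<Longrightarrow> v = 0\<^sub>v r"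
    and rk: "vec_space.rank m A = r"
  shows "\<exists>K \<in> carrier_mat r n. A = C * K"
proof -
  interpret vs: vec_space "TYPE(complex)" m .
  have dist: "distinct (cols C)"
  proof (rule ccontr)
    assume "\<not> distinct (cols C)"
    then obtain i j where ij: "i \<noteq> j" "i < r" "j < r" "col C i = col C j"
      using C by (auto simp: distinct_conv_nth)
    define v :: "complex vec" where "v = unit_vec r i - unit_vec r j"
    have vc: "v \<in> carrier_vec r" unfolding v_def by auto
    have "v $ i = 1" unfolding v_def using ij by auto
    then have "v \<noteq> 0\<^sub>v r" using ij by auto
    moreover have "C *\<^sub>v v = 0\<^sub>v m"
      unfolding v_def using mult_minus_distrib_mat_vec[OF C, of "unit_vec r i" "unit_vec r j"]
        mult_unit_vec_col[OF C ij(2)] mult_unit_vec_col[OF C ij(3)] ij(4) C by auto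
    ultimately show False using inj[OF vc] by auto
  qed
  have indep: "vs.lin_indpt (set (cols C))"
  proof
    assume "vs.lin_dep (set (cols C))"
    then obtain v where "v \<in> carrier_vec r" "v \<noteq> 0\<^sub>v r" "C *\<^sub>v v = 0\<^sub>v m"
      using vs.lin_depE[OF C _ dist] by blast
    then show False using inj by auto
  qed
  have Ssub: "set (cols C) \<subseteq> set (cols A)"
  proof
    fix w assume "w \<in> set (cols C)"
    then obtain k where k: "k < r" "w = col C k" using C by (auto simp: in_set_conv_nth)
    then show "w \<in> set (cols A)" using colC[OF k(1)] rn A by (auto simp: in_set_conv_nth intro!: exI[of _ k])
  qed
  have Scar: "set (cols C) \<subseteq> carrier_vec m" using C cols_dim by blast
  have cardS: "card (set (cols C)) = r" using dist C distinct_card by fastforce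
  have ex: "\<exists>x. x \<in> carrier_vec r \<and> C *\<^sub>v x = col A j" if j: "j < n" for j
  proof -
    let ?w = "col A j"
    have wc: "?w \<in> carrier_vec m" using A by auto
    have wA: "?w \<in> set (cols A)" using A j by (auto simp: in_set_conv_nth intro!: exI[of _ j])
    show ?thesis
    proof (cases "?w \<in> set (cols C)")
      case True
      then obtain i where i: "i < r" "?w = col C i" using C by (auto simp: in_set_conv_nth)
      then show ?thesis using mult_unit_vec_col[OF C i(1)] by (intro exI[of _ "unit_vec r i"]) auto
    next
      case False
      have "?w \<in> vs.span (set (cols C))"
      proof (rule ccontr)
        assume nspan: "?w \<notin> vs.span (set (cols C))"
        have li: "vs.lin_indpt (set (cols C) \<union> {?w})"
          using vs.lin_dep_iff_in_span[OF _ indep _ False] Scar wc nspan by auto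
        have "card (set (cols C) \<union> {?w}) \<le> r"
          using vs.rank_ge_card_indpt[OF A _ li] Ssub wA rk by auto
        moreover have "card (set (cols C) \<union> {?w}) = r + 1" using False cardS by simp
        ultimately show False by simp
      qed
      then have "?w \<in> vs.col_space C" unfolding vs.col_space_def .
      then show ?thesis unfolding vs.col_space_eq[OF C] using C by auto
    qed
  qed
  define x where "x j = (SOME x. x \<in> carrier_vec r \<and> C *\<^sub>v x = col A j)" for j
  have x: "x j \<in> carrier_vec r \<and> C *\<^sub>v x j = col A j" if "j < n" for j
    unfolding x_def using someI_ex[OF ex[OF that]] .
  define K where "K = mat r n (\<lambda>(i,j). x j $ i)"
  have K: "K \<in> carrier_mat r n" unfolding K_def by auto
  have colK: "col K j = x j" if "j < n" for j
    unfolding K_def using x[OF that] that by (auto intro!: eq_vecI)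
  have "A = C * K"
  proof (rule eq_matI)
    fix i j assume "i < dim_row (C * K)" "j < dim_col (C * K)"
    then have i: "i < m" and j: "j < n" using C K by auto
    have "(C * K) $$ (i,j) = (C *\<^sub>v col K j) $ i" using i j C K by auto
    also have "\<dots> = col A j $ i" using colK[OF j] x[OF j] by simp
    also have "\<dots> = A $$ (i,j)" using A i j by auto
    finally show "A $$ (i,j) = (C * K) $$ (i,j)" by simp
  qed (use A C K in auto)
  then show ?thesis using K by blast
qed



lemma assoc_dim: assumes "dim_col A = dim_row B" "dim_col B = dim_row C"
  shows "A * B * C = A * (B * (C :: 'a :: semiring_0 mat))"
proof -
  have "A \<in> carrier_mat (dim_row A) (dim_row B)" "B \<in> carrier_mat (dim_row B) (dim_row C)"
    "C \<in> carrier_mat (dim_row C) (dim_col C)" using assms unfolding carrier_mat_def by simp_all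
  then show ?thesis by (rule assoc_mult_mat)
qed

lemma mink_adj_mult_dim: assumes "dim_col A = dim_row B"
  shows "mink_adj (A * B) = mink_adj B * mink_adj A"
proof -
  have "A \<in> carrier_mat (dim_row A) (dim_row B)" "B \<in> carrier_mat (dim_row B) (dim_col B)"
    using assms unfolding carrier_mat_def by simp_all
  then show ?thesis by (rule mink_adj_mult)
qed

lemma inv_from_det:
  fixes P :: "complex mat"
  assumes P: "P \<in> carrier_mat k k" and d: "det P \<noteq> 0"
  shows "\<exists>Pv \<in> carrier_mat k k. P * Pv = 1\<^sub>m k \<and> Pv * P = 1\<^sub>m k"
proof -
  have "P \<in> Units (ring_mat TYPE(complex) k (undefined :: unit))" using det_non_zero_imp_unit[OF P d] .
  then obtain B where "B \<in> carrier_mat k k" "B * P = 1\<^sub>m k" "P * B = 1\<^sub>m k"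
    unfolding Units_def ring_mat_def by auto
  then show ?thesis by blast
qed

lemma mat_inv_eq:
  fixes M B :: "complex mat"
  assumes M: "M \<in> carrier_mat k k" and B: "B \<in> carrier_mat k k" and MB: "M * B = 1\<^sub>m k" and BM: "B * M = 1\<^sub>m k"
  shows "mat_inv M = B"
  unfolding mat_inv_def
proof (rule the_equality)
  show "B \<in> carrier_mat (dim_row M) (dim_row M) \<and> inverts_mat M B \<and> inverts_mat B M"
    using M B MB BM by (auto simp: inverts_mat_def)
next
  fix B' assume h: "B' \<in> carrier_mat (dim_row M) (dim_row M) \<and> inverts_mat M B' \<and> inverts_mat B' M"
  then have B': "B' \<in> carrier_mat k k" and B'M: "B' * M = 1\<^sub>m k" using M by (auto simp: inverts_mat_def)
  have "B' = B' * (M * B)" using MB B' by simp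
  also have "\<dots> = (B' * M) * B" using assoc_mult_mat[OF B' M B] by simp
  also have "\<dots> = B" using B'M B by simp
  finally show "B' = B" .
qed

lemma mink_adj_inv_selfadj:
  assumes P: "P \<in> carrier_mat k k" and Pv: "Pv \<in> carrier_mat k k" and sa: "mink_adj P = P"
    and PPv: "P * Pv = 1\<^sub>m k" and PvP: "Pv * P = 1\<^sub>m k"
  shows "mink_adj Pv = Pv"
proof -
  have Pva: "mink_adj Pv \<in> carrier_mat k k" using Pv by auto
  have "mink_adj Pv * P = 1\<^sub>m k"
    using mink_adj_mult[OF P Pv] PPv sa by simp
  then have "mink_adj Pv * P * Pv = Pv" using Pv by simp
  moreover have "mink_adj Pv * (P * Pv) = mink_adj Pv" using Pva PPv right_mult_one_mat[OF Pva] by simp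
  ultimately show ?thesis using assoc_mult_mat[OF Pva P Pv] by simp
qed

lemma cancel2:
  assumes AB: "A * B = 1\<^sub>m k" and d1: "dim_col A = dim_row B" and d2: "dim_row Z = k"
  shows "A * (B * (Z :: complex mat)) = Z"
proof -
  have dB: "dim_col B = k" using arg_cong[OF AB, of dim_col] by simp
  have Zc: "Z \<in> carrier_mat k (dim_col Z)" using d2 by (intro carrier_matI) auto
  have "A * B * Z = A * (B * Z)" by (rule assoc_dim[OF d1]) (simp only: dB d2)
  then have "A * (B * Z) = (A * B) * Z" by (rule sym)
  also have "\<dots> = 1\<^sub>m k * Z" by (simp only: AB)
  also have "\<dots> = Z" by (rule left_mult_one_mat[OF Zc])
  finally show ?thesis .
qed

lemma cancel3:
  assumes ABC: "A * (B * C) = 1\<^sub>m k" and d1: "dim_col A = dim_row B" and d2: "dim_col B = dim_row C" and d3: "dim_row Z = k"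
  shows "A * (B * (C * (Z :: complex mat))) = Z"
proof -
  have dC: "dim_col C = k" using arg_cong[OF ABC, of dim_col] by simp
  have "B * C * Z = B * (C * Z)" by (rule assoc_dim[OF d2]) (simp only: dC d3)
  moreover have d1': "dim_col A = dim_row (B * C)" using d1 by simp
  ultimately show ?thesis using cancel2[OF ABC d1' d3] by simp
qed



theorem theorem8p5:
  fixes A A1 A2 A3 A4 :: "complex mat" and m n r :: nat
  assumes "A \<in> carrier_mat m n"
    and "mrank A = r"
    and "mrank (A * mink_adj A) = r"
    and "mrank (mink_adj A * A) = r"
    and "A1 \<in> carrier_mat r r" and "A2 \<in> carrier_mat r (n - r)"
    and "A3 \<in> carrier_mat (m - r) r" and "A4 \<in> carrier_mat (m - r) (n - r)"
    and "A = four_block_mat A1 A2 A3 A4"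
    and "invertible_mat A1"
  shows "minkowski_inverse A =
    mink_adj (row_block A1 A2)
    * mat_inv (mink_adj (A1 @\<^sub>r A3) * A * mink_adj (row_block A1 A2))
    * mink_adj (A1 @\<^sub>r A3)"
proof -
  note Ac = assms(1) and A1c = assms(5) and A2c = assms(6) and A3c = assms(7) and A4c = assms(8)
  note Aeq = assms(9)
  have d1: "dim_row A = r + (m - r)" "dim_col A = r + (n - r)"
    using A1c A4c unfolding Aeq by auto
  have d2: "dim_row A = m" "dim_col A = n" using Ac by auto
  have rm: "r \<le> m" using d1(1) d2(1) by linarith
  have rn: "r \<le> n" using d1(2) d2(2) by linarith
  define C where "C = A1 @\<^sub>r A3"
  define R where "R = row_block A1 A2"
  have Cc: "C \<in> carrier_mat m r" unfolding C_def using carrier_append_rows[OF A1c A3c] rm by simp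
  have "R \<in> carrier_mat (r + 0) (r + (n - r))" unfolding R_def row_block_def
    by (rule four_block_carrier_mat[OF A1c]) (use A2c in \<open>simp add: carrier_matD\<close>)
  then have Rc: "R \<in> carrier_mat r n" using rn by simp
  have Cidx: "C $$ (i,k) = A $$ (i,k)" if "i < m" "k < r" for i k
    using that A1c A2c A3c A4c rm unfolding C_def Aeq append_rows_def by auto
  have Ridx: "R $$ (i,j) = A $$ (i,j)" if "i < r" "j < n" for i j
    using that A1c A2c A3c A4c rm rn unfolding R_def Aeq row_block_def by auto
  have C1idx: "C $$ (i,k) = A1 $$ (i,k)" if "i < r" "k < r" for i k
    using that A1c A3c unfolding C_def append_rows_def by auto
  obtain A1i where A1ic: "A1i \<in> carrier_mat r r" and A1A1i: "A1 * A1i = 1\<^sub>m r" and A1iA1: "A1i * A1 = 1\<^sub>m r"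
  proof -
    have "\<exists>B. A1 * B = 1\<^sub>m (dim_row A1) \<and> B * A1 = 1\<^sub>m (dim_row B)"
      using assms(10) unfolding invertible_mat_def inverts_mat_def by (elim conjE)
    then obtain B where B1: "A1 * B = 1\<^sub>m (dim_row A1)" and B2: "B * A1 = 1\<^sub>m (dim_row B)"
      by (elim exE conjE)
    have "dim_col B = dim_row A1" using arg_cong[OF B1, of dim_col] by simp
    then have dcB: "dim_col B = r" using A1c by simp
    have "dim_row B = dim_col A1" using arg_cong[OF B2, of dim_col] by simp
    then have drB: "dim_row B = r" using A1c by simp
    have Bc: "B \<in> carrier_mat r r" using dcB drB by (intro carrier_matI)
    have "A1 * B = 1\<^sub>m r" using B1[unfolded carrier_matD(1)[OF A1c]] .
    moreover have "B * A1 = 1\<^sub>m r" using B2[unfolded drB] .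
    ultimately show ?thesis using Bc by (rule that[rotated])
  qed
  have colC: "col C k = col A k" if "k < r" for k
    using that rn Cidx Cc Ac by (auto intro!: eq_vecI)
  have inj: "v = 0\<^sub>v r" if v: "v \<in> carrier_vec r" and Cv: "C *\<^sub>v v = 0\<^sub>v m" for v
  proof -
    have "A1 *\<^sub>v v = 0\<^sub>v r"
    proof (rule eq_vecI)
      fix i assume "i < dim_vec (0\<^sub>v r :: complex vec)"
      then have i: "i < r" by simp
      have "row A1 i = row C i" using i rm A1c Cc C1idx by (auto intro!: eq_vecI)
      then have "(A1 *\<^sub>v v) $ i = (C *\<^sub>v v) $ i" using i A1c Cc rm by auto
      then show "(A1 *\<^sub>v v) $ i = 0\<^sub>v r $ i" using Cv i rm by simp
    qed (use A1c in auto)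
    moreover have "A1i *\<^sub>v 0\<^sub>v r = 0\<^sub>v r"
      by (intro eq_vecI) (use A1ic in \<open>auto simp: scalar_prod_def\<close>)
    ultimately have "A1i *\<^sub>v (A1 *\<^sub>v v) = 0\<^sub>v r" by simp
    then show ?thesis using assoc_mult_mat_vec[OF A1ic A1c v] A1iA1 v by simp
  qed
  have rkA: "vec_space.rank m A = r" using assms(2) Ac unfolding mrank_def by simp
  obtain K where Kc: "K \<in> carrier_mat r n" and ACK: "A = C * K"
    using factor_exists[OF Ac Cc rn colC inj rkA] by blast
  have RK: "R = A1 * K"
  proof (rule eq_matI)
    fix i j assume "i < dim_row (A1 * K)" "j < dim_col (A1 * K)"
    then have i: "i < r" and j: "j < n" using A1c Kc by auto
    have "row A1 i = row C i" using i rm A1c Cc C1idx by (auto intro!: eq_vecI)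
    then have "(A1 * K) $$ (i,j) = (C * K) $$ (i,j)" using i j A1c Cc Kc rm by auto
    then show "R $$ (i,j) = (A1 * K) $$ (i,j)" using Ridx[OF i j] ACK by simp
  qed (use Rc A1c Kc in auto)
  have dC: "dim_row C = m" "dim_col C = r" using Cc by auto
  have dK: "dim_row K = r" "dim_col K = n" using Kc by auto
  have dA1: "dim_row A1 = r" "dim_col A1 = r" using A1c by auto
  have dA1i: "dim_row A1i = r" "dim_col A1i = r" using A1ic by auto
  have dR: "dim_row R = r" "dim_col R = n" using Rc by auto
  note dims = dC dK dA1 dA1i
  have Pc: "mink_adj C * C \<in> carrier_mat r r" using Cc by auto
  have Qc: "K * mink_adj K \<in> carrier_mat r r" using Kc by auto
  have Kac: "mink_adj K \<in> carrier_mat n r" using Kc by auto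
  have Cac: "mink_adj C \<in> carrier_mat r m" using Cc by auto
  have e1: "mink_adj A * A = mink_adj K * (mink_adj C * C) * K"
    unfolding ACK by (simp add: mink_adj_mult_dim assoc_dim dims)
  have e2: "A * mink_adj A = C * (K * mink_adj K) * mink_adj C"
    unfolding ACK by (simp add: mink_adj_mult_dim assoc_dim dims)
  have r1: "vec_space.rank n (mink_adj K * (mink_adj C * C) * K) = r"
    using assms(4) unfolding mrank_def e1 using dims by simp
  have r2: "vec_space.rank m (C * (K * mink_adj K) * mink_adj C) = r"
    using assms(3) unfolding mrank_def e2 using dims by simp
  obtain Pv where Pvc: "Pv \<in> carrier_mat r r" and PPv: "mink_adj C * C * Pv = 1\<^sub>m r" and PvP: "Pv * (mink_adj C * C) = 1\<^sub>m r"
    using inv_from_det[OF Pc det_nonzero_from_rank[OF Pc Kac Kc r1]] by blast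
  obtain Qv where Qvc: "Qv \<in> carrier_mat r r" and QQv: "K * mink_adj K * Qv = 1\<^sub>m r" and QvQ: "Qv * (K * mink_adj K) = 1\<^sub>m r"
    using inv_from_det[OF Qc det_nonzero_from_rank[OF Qc Cc Cac r2]] by blast
  have dPv: "dim_row Pv = r" "dim_col Pv = r" using Pvc by auto
  have dQv: "dim_row Qv = r" "dim_col Qv = r" using Qvc by auto
  have Pa: "mink_adj (mink_adj C * C) = mink_adj C * C" by (simp add: mink_adj_mult_dim dims)
  have Qa: "mink_adj (K * mink_adj K) = K * mink_adj K" by (simp add: mink_adj_mult_dim dims)
  have Pva: "mink_adj Pv = Pv" using mink_adj_inv_selfadj[OF Pc Pvc Pa PPv PvP] .
  have Qva: "mink_adj Qv = Qv" using mink_adj_inv_selfadj[OF Qc Qvc Qa QQv QvQ] .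
  have A1a1: "mink_adj A1 * mink_adj A1i = 1\<^sub>m r"
    using A1iA1 mink_adj_mult_dim[of A1i A1] dims by simp
  have A1a2: "mink_adj A1i * mink_adj A1 = 1\<^sub>m r"
    using A1A1i mink_adj_mult_dim[of A1 A1i] dims by simp
  have PPv': "mink_adj C * (C * Pv) = 1\<^sub>m r" using PPv assoc_dim[of "mink_adj C" C Pv] dims dPv by simp
  have QQv': "K * (mink_adj K * Qv) = 1\<^sub>m r" using QQv assoc_dim[of K "mink_adj K" Qv] dims dQv by simp
  have R1: "mink_adj A1 * (mink_adj A1i * Z) = Z" if "dim_row Z = r" for Z
    using cancel2[OF A1a1] that dims by simp
  have R2: "K * (mink_adj K * (Qv * Z)) = Z" if "dim_row Z = r" for Z
    using cancel3[OF QQv'] that dims dQv by simp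
  have R3: "Pv * (mink_adj C * (C * Z)) = Z" if "dim_row Z = r" for Z
    using cancel3[OF PvP] that dims dPv by simp
  have R4: "Qv * (K * (mink_adj K * Z)) = Z" if "dim_row Z = r" for Z
    using cancel3[OF QvQ] that dims dQv by simp
  define Mi where "Mi = mink_adj A1i * (Qv * Pv)"
  have Mic: "Mi \<in> carrier_mat r r" unfolding Mi_def using A1ic Qvc Pvc by auto
  have Mc: "mink_adj C * A * mink_adj R \<in> carrier_mat r r" using Cc Ac Rc by auto
  have M1: "mink_adj C * A * mink_adj R * Mi = 1\<^sub>m r"
    unfolding Mi_def ACK RK by (simp add: mink_adj_mult_dim assoc_dim dims dPv dQv R1 R2 PPv')
  have M2: "Mi * (mink_adj C * A * mink_adj R) = 1\<^sub>m r"
    unfolding Mi_def ACK RK by (simp add: mink_adj_mult_dim assoc_dim dims dPv dQv R3 R4 A1a2)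
  have Minv: "mat_inv (mink_adj C * A * mink_adj R) = Mi" using mat_inv_eq[OF Mc Mic M1 M2] .
  define X where "X = mink_adj R * Mi * mink_adj C"
  have Xeq: "X = mink_adj K * (Qv * (Pv * mink_adj C))"
    unfolding X_def Mi_def RK by (simp add: mink_adj_mult_dim assoc_dim dims dPv dQv R1)
  have Xc: "X \<in> carrier_mat n m" unfolding Xeq using Kc Qvc Pvc Cc by auto
  have AX: "A * X = C * (Pv * mink_adj C)"
    unfolding Xeq ACK by (simp add: assoc_dim dims dPv dQv R2)
  have XA: "X * A = mink_adj K * (Qv * K)"
    unfolding Xeq ACK by (simp add: assoc_dim dims dPv dQv R3)
  have "is_minkowski_inverse A X"
    unfolding is_minkowski_inverse_def
  proof (intro conjI)
    show "X \<in> carrier_mat (dim_col A) (dim_row A)" using Xc Ac by auto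
    show "A * X * A = A" unfolding AX unfolding ACK by (simp add: assoc_dim dims dPv dQv R3)
    show "X * A * X = X" unfolding XA unfolding Xeq by (simp add: assoc_dim dims dPv dQv R4)
    show "mink_adj (A * X) = A * X" unfolding AX by (simp add: mink_adj_mult_dim assoc_dim dims dPv dQv Pva)
    show "mink_adj (X * A) = X * A" unfolding XA by (simp add: mink_adj_mult_dim assoc_dim dims dPv dQv Qva)
  qed
  then have "minkowski_inverse A = X" by (rule minkowski_inverse_eq[OF Ac])
  then show ?thesis unfolding X_def Minv[symmetric] unfolding C_def R_def .
qed

end
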